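(* Let $A$ be a differential $K$-algebra without exponents nor logarithm. If $V$ is a $K$-linear representation of $\mathbb{Z}$, then $(V\otimes_KE_A)^{1\otimes\partial=0}=V\otimes 1\;(\cong V)$. If $M$ is a differential module over $A$ which is free as an $A$-module, then $(M\otimes_AE_A)^{1\otimes\sigma=1}=M\otimes 1\;(\cong M)$.
   Context: $K$ is an algebraically closed field of characteristic $0$. $K[t^K]$ is the group algebra over $K$ of $(K,+)$, with $K$-basis $t^a$ ($a\in K$), $t^at^b=t^{a+b}$; $K[t,t^{-1}]$ is identified with the span of $t^n$, $n\in\mathbb{Z}$. Fix a set $\widetilde{K/\mathbb{Z}}\subset K$ of representatives of $K/\mathbb{Z}$ with $0\in\widetilde{K/\mathbb{Z}}$. $A$ is a commutative ring with unit containing $K[t,t^{-1}]$ as a subring, with a derivation $\partial:A\to A$ extending $t\frac{d}{dt}$. $A[t^K]:=A\otimes_{K[t,t^{-1}]}K[t^K]$ (free $A$-module with basis $\{t^a\}_{a\in\widetilde{K/\mathbb{Z}}}$), $E_A:=A[t^K][\ell]$ with $\ell$ an indeterminate, with derivation $\partial$ extending that of $A$, $\partial(t^a)=at^a$, $\partial(\ell)=1$. $A$ is a differential $K$-algebra without exponents nor logarithm if $\{f\in A:\partial^2 f=0\}=K$ and, for every $a\in\widetilde{K/\mathbb{Z}}\setminus\{0\}$, $\partial f+af=0$ with $f\in A$ implies $f=0$. Fix a group isomorphism $\overline{\gamma}:K/\mathbb{Z}\to K^\times$, $\gamma:=\overline\gamma\circ\pi:K\to K^\times$; $\sigma$ is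 the ring automorphism of $E_A$ fixing $A$, with $\sigma(t^a)=\gamma(a)t^a$, $\sigma(\ell)=\ell+1$. A differential module over $A$ is an $A$-module $M$ with an additive map $\nabla:M\to M$ such that $\nabla(fm)=\partial(f)m+f\nabla(m)$. A $K$-linear representation of $\mathbb{Z}$ is a $K$-vector space $V$ with a $K$-linear automorphism $[1]$. *)

theory Defs
  imports Main "HOL-Library.Function_Algebras" "HOL-Computational_Algebra.Polynomial"
begin

text \<open>The tensor product M (x)_r N is the quotient of the free module on M x N by the
  submodule generated by the bilinearity relations; its elements are represented
  as cosets (sets of finitely supported functions).\<close>

definition fsupp :: "('x \<Rightarrow> 'r::zero) \<Rightarrow> 'x set" where
  "fsupp f = {x. f x \<noteq> 0}"

definition free_elems :: "('x \<Rightarrow> 'r::zero) set" where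
  "free_elems = {f. finite (fsupp f)}"

definition fgen :: "'x \<Rightarrow> 'x \<Rightarrow> 'r::{zero,one}" where
  "fgen p = (\<lambda>q. if q = p then 1 else 0)"

definition fscale :: "'r::times \<Rightarrow> ('x \<Rightarrow> 'r) \<Rightarrow> ('x \<Rightarrow> 'r)" where
  "fscale c f = (\<lambda>q. c * f q)"

definition tensor_rels ::
  "('r::comm_ring_1 \<Rightarrow> 'm::ab_group_add \<Rightarrow> 'm) \<Rightarrow> ('r \<Rightarrow> 'n::ab_group_add \<Rightarrow> 'n)
   \<Rightarrow> ('m \<times> 'n \<Rightarrow> 'r) set" where
  "tensor_rels sM sN =
     {fgen (m + m', n) - fgen (m, n) - fgen (m', n) | m m' n. True} \<union>
     {fgen (m, n + n') - fgen (m, n) - fgen (m, n') | m n n'. True} \<union>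
     {fgen (sM c m, n) - fscale c (fgen (m, n)) | c m n. True} \<union>
     {fgen (m, sN c n) - fscale c (fgen (m, n)) | c m n. True}"

definition tensor_kernel ::
  "('r::comm_ring_1 \<Rightarrow> 'm::ab_group_add \<Rightarrow> 'm) \<Rightarrow> ('r \<Rightarrow> 'n::ab_group_add \<Rightarrow> 'n)
   \<Rightarrow> ('m \<times> 'n \<Rightarrow> 'r) set" where
  "tensor_kernel sM sN = module.span fscale (tensor_rels sM sN)"

definition tcls ::
  "('r::comm_ring_1 \<Rightarrow> 'm::ab_group_add \<Rightarrow> 'm) \<Rightarrow> ('r \<Rightarrow> 'n::ab_group_add \<Rightarrow> 'n)
   \<Rightarrow> ('m \<times> 'n \<Rightarrow> 'r) \<Rightarrow> ('m \<times> 'n \<Rightarrow> 'r) set" where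
  "tcls sM sN x = {y \<in> free_elems. x - y \<in> tensor_kernel sM sN}"

definition tensor_space ::
  "('r::comm_ring_1 \<Rightarrow> 'm::ab_group_add \<Rightarrow> 'm) \<Rightarrow> ('r \<Rightarrow> 'n::ab_group_add \<Rightarrow> 'n)
   \<Rightarrow> ('m \<times> 'n \<Rightarrow> 'r) set set" where
  "tensor_space sM sN = tcls sM sN ` free_elems"

definition tpure ::
  "('r::comm_ring_1 \<Rightarrow> 'm::ab_group_add \<Rightarrow> 'm) \<Rightarrow> ('r \<Rightarrow> 'n::ab_group_add \<Rightarrow> 'n)
   \<Rightarrow> 'm \<Rightarrow> 'n \<Rightarrow> ('m \<times> 'n \<Rightarrow> 'r) set" where
  "tpure sM sN m n = tcls sM sN (fgen (m, n))"

definition fpush :: "('x \<Rightarrow> 'y) \<Rightarrow> ('x \<Rightarrow> 'r::comm_monoid_add) \<Rightarrow> ('y \<Rightarrow> 'r)" where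
  "fpush h x = (\<lambda>q. \<Sum>p\<in>{p \<in> fsupp x. h p = q}. x p)"

text \<open>The map 1 (x) D on M (x) N induced by an r-linear map D : N -> N,
  i.e. the map m (x) n |-> m (x) D n.\<close>
definition tensor_id_map ::
  "('r::comm_ring_1 \<Rightarrow> 'm::ab_group_add \<Rightarrow> 'm) \<Rightarrow> ('r \<Rightarrow> 'n::ab_group_add \<Rightarrow> 'n)
   \<Rightarrow> ('n \<Rightarrow> 'n) \<Rightarrow> ('m \<times> 'n \<Rightarrow> 'r) set \<Rightarrow> ('m \<times> 'n \<Rightarrow> 'r) set" where
  "tensor_id_map sM sN D C =
     tcls sM sN (fpush (\<lambda>(m, n). (m, D n)) (SOME x. x \<in> C))"

definition alg_closed :: "'k::field itself \<Rightarrow> bool" where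
  "alg_closed _ = (\<forall>p :: 'k poly. degree p > 0 \<longrightarrow> (\<exists>x. poly p x = 0))"

definition is_ring_hom :: "('x::comm_ring_1 \<Rightarrow> 'y::comm_ring_1) \<Rightarrow> bool" where
  "is_ring_hom f = ((\<forall>x y. f (x + y) = f x + f y) \<and> (\<forall>x y. f (x * y) = f x * f y) \<and> f 1 = 1)"

definition lpow :: "'a::comm_ring_1 \<Rightarrow> int \<Rightarrow> 'a" where
  "lpow u n = (if 0 \<le> n then u ^ nat n else (THE v. u * v = 1) ^ nat (- n))"

text \<open>A contains K[t,t^-1] as a subring: emb : K -> A is a ring homomorphism, t is a unit,
  and the monomials t^n (n in Z) are K-linearly independent in A.\<close>
definition contains_laurent :: "('k::field \<Rightarrow> 'a::comm_ring_1) \<Rightarrow> 'a \<Rightarrow> bool" where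
  "contains_laurent emb t =
     (is_ring_hom emb \<and> inj emb \<and> (\<exists>u. t * u = 1) \<and>
      (\<forall>(c :: int \<Rightarrow> 'k) S. finite S \<longrightarrow> (\<Sum>n\<in>S. emb (c n) * lpow t n) = 0 \<longrightarrow> (\<forall>n\<in>S. c n = 0)))"

definition is_derivation :: "('a::comm_ring_1 \<Rightarrow> 'a) \<Rightarrow> bool" where
  "is_derivation d = ((\<forall>f g. d (f + g) = d f + d g) \<and> (\<forall>f g. d (f * g) = d f * g + f * d g))"

text \<open>d extends t d/dt on K[t,t^-1].\<close>
definition extends_tddt :: "('k::field_char_0 \<Rightarrow> 'a::comm_ring_1) \<Rightarrow> 'a \<Rightarrow> ('a \<Rightarrow> 'a) \<Rightarrow> bool" where
  "extends_tddt emb t d =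
     (\<forall>(c :: int \<Rightarrow> 'k) S. finite S \<longrightarrow>
        d (\<Sum>n\<in>S. emb (c n) * lpow t n) = (\<Sum>n\<in>S. emb (of_int n * c n) * lpow t n))"

definition reps_KZ :: "'k::field_char_0 set \<Rightarrow> bool" where
  "reps_KZ R = (0 \<in> R \<and> (\<forall>a. \<exists>!r. r \<in> R \<and> a - r \<in> \<int>))"

definition no_exp_no_log ::
  "('k::field_char_0 \<Rightarrow> 'a::comm_ring_1) \<Rightarrow> 'k set \<Rightarrow> ('a \<Rightarrow> 'a) \<Rightarrow> bool" where
  "no_exp_no_log emb R d =
     ({f. d (d f) = 0} = range emb \<and>
      (\<forall>a \<in> R - {0}. \<forall>f. d f + emb a * f = 0 \<longrightarrow> f = 0))"

text \<open>gamma = gammabar o pi, with gammabar : K/Z -> K^x a group isomorphism.\<close>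
definition gamma_iso :: "('k::field_char_0 \<Rightarrow> 'k) \<Rightarrow> bool" where
  "gamma_iso \<gamma> =
     ((\<forall>a b. \<gamma> (a + b) = \<gamma> a * \<gamma> b) \<and> (\<forall>a. \<gamma> a \<noteq> 0) \<and>
      (\<forall>a. \<gamma> a = 1 \<longleftrightarrow> a \<in> \<int>) \<and> (\<forall>c. c \<noteq> 0 \<longrightarrow> (\<exists>a. \<gamma> a = c)))"

text \<open>E = A[t^K][l]: iota : A -> E ring hom, T a = t^a, l the indeterminate, such that
  t^a t^b = t^(a+b), t^n (n in Z) is the element t^n of A, and the elements t^a l^n
  (a in R, n in N) form an A-basis of E.\<close>
definition is_E_A ::
  "('k::field_char_0 \<Rightarrow> 'a::comm_ring_1) \<Rightarrow> 'a \<Rightarrow> 'k set \<Rightarrow>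
   ('a \<Rightarrow> 'e::comm_ring_1) \<Rightarrow> ('k \<Rightarrow> 'e) \<Rightarrow> 'e \<Rightarrow> bool" where
  "is_E_A emb t R \<iota> T l =
     (is_ring_hom \<iota> \<and>
      (\<forall>a b. T (a + b) = T a * T b) \<and>
      (\<forall>n::int. T (of_int n) = \<iota> (lpow t n)) \<and>
      (\<forall>x. \<exists>S c. finite S \<and> S \<subseteq> R \<times> UNIV \<and>
              x = (\<Sum>(a, n)\<in>S. \<iota> (c a n) * T a * l ^ n)) \<and>
      (\<forall>S c. finite S \<longrightarrow> S \<subseteq> R \<times> UNIV \<longrightarrow>
              (\<Sum>(a, n)\<in>S. \<iota> (c a n) * T a * l ^ n) = 0 \<longrightarrow> (\<forall>(a, n)\<in>S. c a n = 0)))"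

definition is_E_derivation ::
  "('k::field_char_0 \<Rightarrow> 'a::comm_ring_1) \<Rightarrow> ('a \<Rightarrow> 'a) \<Rightarrow>
   ('a \<Rightarrow> 'e::comm_ring_1) \<Rightarrow> ('k \<Rightarrow> 'e) \<Rightarrow> 'e \<Rightarrow> ('e \<Rightarrow> 'e) \<Rightarrow> bool" where
  "is_E_derivation emb d \<iota> T l dE =
     (is_derivation dE \<and> (\<forall>f. dE (\<iota> f) = \<iota> (d f)) \<and>
      (\<forall>a. dE (T a) = \<iota> (emb a) * T a) \<and> dE l = 1)"

definition is_E_sigma ::
  "('k::field_char_0 \<Rightarrow> 'a::comm_ring_1) \<Rightarrow> ('k \<Rightarrow> 'k) \<Rightarrow>
   ('a \<Rightarrow> 'e::comm_ring_1) \<Rightarrow> ('k \<Rightarrow> 'e) \<Rightarrow> 'e \<Rightarrow> ('e \<Rightarrow> 'e) \<Rightarrow> bool" where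
  "is_E_sigma emb \<gamma> \<iota> T l \<sigma> =
     (is_ring_hom \<sigma> \<and> bij \<sigma> \<and> (\<forall>f. \<sigma> (\<iota> f) = \<iota> f) \<and>
      (\<forall>a. \<sigma> (T a) = \<iota> (emb (\<gamma> a)) * T a) \<and> \<sigma> l = l + 1)"

definition diff_module ::
  "('a::comm_ring_1 \<Rightarrow> 'a) \<Rightarrow> ('a \<Rightarrow> 'm::ab_group_add \<Rightarrow> 'm) \<Rightarrow> ('m \<Rightarrow> 'm) \<Rightarrow> bool" where
  "diff_module d sM nabla =
     (module sM \<and> (\<forall>x y. nabla (x + y) = nabla x + nabla y) \<and>
      (\<forall>f x. nabla (sM f x) = sM (d f) x + sM f (nabla x)))"

definition free_module :: "('a::comm_ring_1 \<Rightarrow> 'm::ab_group_add \<Rightarrow> 'm) \<Rightarrow> bool" where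
  "free_module sM = (\<exists>B. \<not> module.dependent sM B \<and> module.span sM B = UNIV)"

definition Z_rep :: "('k::field \<Rightarrow> 'v::ab_group_add \<Rightarrow> 'v) \<Rightarrow> ('v \<Rightarrow> 'v) \<Rightarrow> bool" where
  "Z_rep sV rho = (vector_space sV \<and> Vector_Spaces.linear sV sV rho \<and> bij rho)"

end

theory Submission
  imports Defs
begin


locale fbasis = module s for s :: "'r::comm_ring_1 \<Rightarrow> 'x::ab_group_add \<Rightarrow> 'x" +
  fixes g :: "'i \<Rightarrow> 'x" and J :: "'i set"
  assumes spans: "\<And>x. \<exists>S c. finite S \<and> S \<subseteq> J \<and> x = (\<Sum>i\<in>S. s (c i) (g i))"
    and indep: "\<And>S c i. finite S \<Longrightarrow> S \<subseteq> J \<Longrightarrow> (\<Sum>i\<in>S. s (c i) (g i)) = 0 \<Longrightarrow> i \<in> S \<Longrightarrow> c i = 0"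
begin

definition isrep where
  "isrep x c \<longleftrightarrow> finite (fsupp c) \<and> fsupp c \<subseteq> J \<and> x = (\<Sum>i\<in>fsupp c. s (c i) (g i))"

definition coord where "coord x = (THE c. isrep x c)"

lemma sum_superset:
  assumes "finite S" "fsupp c \<subseteq> S"
  shows "(\<Sum>i\<in>fsupp c. s (c i) (g i)) = (\<Sum>i\<in>S. s (c i) (g i))"
  by (rule sum.mono_neutral_left) (use assms in \<open>auto simp: fsupp_def\<close>)

lemma isrep_of:
  assumes "finite S" "S \<subseteq> J" "x = (\<Sum>i\<in>S. s (c i) (g i))"
  shows "isrep x (\<lambda>i. if i \<in> S then c i else 0)"
proof -
  let ?c = "\<lambda>i. if i \<in> S then c i else 0"
  have sub: "fsupp ?c \<subseteq> S" by (auto simp: fsupp_def split: if_splits)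
  have "(\<Sum>i\<in>fsupp ?c. s (?c i) (g i)) = (\<Sum>i\<in>S. s (?c i) (g i))"
    by (rule sum_superset[OF assms(1) sub])
  also have "\<dots> = x" using assms(3) by (auto intro: sum.cong)
  finally show ?thesis unfolding isrep_def using sub assms(1,2) finite_subset by auto
qed

lemma isrep_unique:
  assumes "isrep x c" "isrep x c'"
  shows "c = c'"
proof
  fix i
  let ?U = "fsupp c \<union> fsupp c'"
  have fin: "finite ?U" using assms by (auto simp: isrep_def)
  have UJ: "?U \<subseteq> J" using assms by (auto simp: isrep_def)
  have e1: "x = (\<Sum>i\<in>?U. s (c i) (g i))"
    using assms(1) sum_superset[OF fin, of c] by (auto simp: isrep_def)
  have e2: "x = (\<Sum>i\<in>?U. s (c' i) (g i))"
    using assms(2) sum_superset[OF fin, of c'] by (auto simp: isrep_def)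
  have "(\<Sum>i\<in>?U. s (c i - c' i) (g i)) = (\<Sum>i\<in>?U. s (c i) (g i)) - (\<Sum>i\<in>?U. s (c' i) (g i))"
    by (simp only: scale_left_diff_distrib sum_subtractf)
  also have "\<dots> = 0" using e1 e2 by simp
  finally have z: "(\<Sum>i\<in>?U. s (c i - c' i) (g i)) = 0" .
  have "\<forall>i\<in>?U. c i - c' i = 0"
    using indep[OF fin UJ, of "\<lambda>i. c i - c' i"] z by simp
  then show "c i = c' i"
  proof (cases "i \<in> ?U")
    case False
    then have "c i = 0" "c' i = 0" unfolding fsupp_def by blast+
    then show ?thesis by simp
  qed simp
qed

lemma isrep_ex: "\<exists>c. isrep x c"
  using spans[of x] isrep_of by blast

lemma isrep_coord: "isrep x (coord x)"
  unfolding coord_def using isrep_ex isrep_unique by (metis theI)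

lemma coord_char:
  assumes "finite S" "S \<subseteq> J" "x = (\<Sum>i\<in>S. s (c i) (g i))"
  shows "coord x = (\<lambda>i. if i \<in> S then c i else 0)"
  using isrep_unique[OF isrep_coord isrep_of[OF assms]] .

lemma coord_fin: "finite (fsupp (coord x))"
  using isrep_coord by (auto simp: isrep_def)

lemma coord_J: "i \<notin> J \<Longrightarrow> coord x i = 0"
  using isrep_coord[of x] by (auto simp: isrep_def fsupp_def)

lemma coord_repr:
  assumes "finite S" "fsupp (coord x) \<subseteq> S"
  shows "x = (\<Sum>i\<in>S. s (coord x i) (g i))"
  using isrep_coord[of x] sum_superset[OF assms] by (auto simp: isrep_def)

lemma coord_zero: "coord 0 = (\<lambda>i. 0)"
  using coord_char[of "{}" 0] by auto

lemma coord_eq0: "coord x = (\<lambda>i. 0) \<Longrightarrow> x = 0"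
  using coord_repr[of "{}" x] by (auto simp: fsupp_def)

lemma coord_add: "coord (x + y) = (\<lambda>i. coord x i + coord y i)"
proof -
  let ?U = "fsupp (coord x) \<union> fsupp (coord y) \<inter> J"
  let ?V = "(fsupp (coord x) \<union> fsupp (coord y)) \<inter> J"
  have fin: "finite ?V" using coord_fin by auto
  have sx: "fsupp (coord x) \<subseteq> ?V" using coord_J by (auto simp: fsupp_def)
  have sy: "fsupp (coord y) \<subseteq> ?V" using coord_J by (auto simp: fsupp_def)
  have "x + y = (\<Sum>i\<in>?V. s (coord x i) (g i)) + (\<Sum>i\<in>?V. s (coord y i) (g i))"
    using coord_repr[OF fin sx] coord_repr[OF fin sy] by metis
  also have "\<dots> = (\<Sum>i\<in>?V. s (coord x i + coord y i) (g i))"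
    by (simp add: scale_left_distrib sum.distrib)
  finally have eq: "x + y = (\<Sum>i\<in>?V. s (coord x i + coord y i) (g i))" .
  have "coord (x + y) = (\<lambda>i. if i \<in> ?V then coord x i + coord y i else 0)"
    by (rule coord_char[OF fin _ eq]) auto
  also have "\<dots> = (\<lambda>i. coord x i + coord y i)"
    by (auto simp: fun_eq_iff fsupp_def coord_J)
  finally show ?thesis .
qed

lemma coord_scale: "coord (s a x) = (\<lambda>i. a * coord x i)"
proof -
  let ?V = "fsupp (coord x) \<inter> J"
  have fin: "finite ?V" using coord_fin by auto
  have sx: "fsupp (coord x) \<subseteq> ?V" using coord_J by (auto simp: fsupp_def)
  have "s a x = s a (\<Sum>i\<in>?V. s (coord x i) (g i))"
    using coord_repr[OF fin sx] by metis
  also have "\<dots> = (\<Sum>i\<in>?V. s (a * coord x i) (g i))"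
    by (simp add: scale_sum_right)
  finally have eq: "s a x = (\<Sum>i\<in>?V. s (a * coord x i) (g i))" .
  have "coord (s a x) = (\<lambda>i. if i \<in> ?V then a * coord x i else 0)"
    by (rule coord_char[OF fin _ eq]) auto
  also have "\<dots> = (\<lambda>i. a * coord x i)"
    by (auto simp: fun_eq_iff fsupp_def coord_J)
  finally show ?thesis .
qed

lemma coord_sum: "coord (\<Sum>k\<in>K. f k) = (\<lambda>i. \<Sum>k\<in>K. coord (f k) i)"
  by (induct K rule: infinite_finite_induct) (auto simp: coord_zero coord_add)

lemma coord_diff: "coord (x - y) = (\<lambda>i. coord x i - coord y i)"
proof -
  have "coord (x - y) = (\<lambda>i. coord (x - y + y) i - coord y i)"
    by (simp only: coord_add) simp
  then show ?thesis by simp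
qed

lemma coord_gen: "j \<in> J \<Longrightarrow> coord (g j) = (\<lambda>i. if i = j then 1 else 0)"
  using coord_char[of "{j}" "g j" "\<lambda>_. 1"] by auto

end




lemma module_fscale: "module (fscale :: 'r::comm_ring_1 \<Rightarrow> ('x \<Rightarrow> 'r) \<Rightarrow> ('x \<Rightarrow> 'r))"
  by unfold_locales (auto simp: fscale_def fun_eq_iff algebra_simps)

lemma free_zero: "(0::'a\<Rightarrow>'r::comm_ring_1) \<in> free_elems"
  by (simp add: free_elems_def fsupp_def)

lemma free_add: "(x::'a\<Rightarrow>'r::comm_ring_1) \<in> free_elems \<Longrightarrow> y \<in> free_elems \<Longrightarrow> x + y \<in> free_elems"
  unfolding free_elems_def fsupp_def
  by (rule CollectI, erule CollectE, erule CollectE, rule finite_subset[of _ "{q. x q \<noteq> 0} \<union> {q. y q \<noteq> 0}"]) auto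

lemma free_uminus: "(x::'a\<Rightarrow>'r::comm_ring_1) \<in> free_elems \<Longrightarrow> - x \<in> free_elems"
  unfolding free_elems_def fsupp_def by simp

lemma free_diff: "(x::'a\<Rightarrow>'r::comm_ring_1) \<in> free_elems \<Longrightarrow> y \<in> free_elems \<Longrightarrow> x - y \<in> free_elems"
  using free_add[of x "- y"] free_uminus[of y] by simp

lemma free_scale: "(x::'a\<Rightarrow>'r::comm_ring_1) \<in> free_elems \<Longrightarrow> fscale c x \<in> free_elems"
  unfolding free_elems_def fsupp_def fscale_def
  by (rule CollectI, erule CollectE, rule finite_subset[of _ "{q. x q \<noteq> 0}"]) auto

lemma free_gen: "(fgen p :: 'a\<Rightarrow>'r::comm_ring_1) \<in> free_elems"
  unfolding free_elems_def fsupp_def fgen_def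
  by (rule CollectI, rule finite_subset[of _ "{p}"]) auto

lemma free_sum: "(\<And>k. k \<in> A \<Longrightarrow> f k \<in> free_elems) \<Longrightarrow> (sum f A :: 'a\<Rightarrow>'r::comm_ring_1) \<in> free_elems"
  by (induct A rule: infinite_finite_induct) (auto simp: free_zero free_add)

lemma sum_fun_apply: "(sum f A) x = (\<Sum>a\<in>A. f a x)"
  by (induct A rule: infinite_finite_induct) auto

lemma fsupp_scale: "fsupp (fscale c (x::'a\<Rightarrow>'r::comm_ring_1)) \<subseteq> fsupp x"
  by (auto simp: fsupp_def fscale_def)

lemma free_expand:
  fixes x :: "'a \<Rightarrow> 'r::comm_ring_1"
  assumes "x \<in> free_elems"
  shows "x = (\<Sum>p\<in>fsupp x. fscale (x p) (fgen p))"
proof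
  fix q
  have fin: "finite (fsupp x)" using assms by (simp add: free_elems_def)
  have "(\<Sum>p\<in>fsupp x. fscale (x p) (fgen p)) q = (\<Sum>p\<in>fsupp x. (if p = q then x p else 0))"
    unfolding sum_fun_apply by (rule sum.cong) (auto simp: fscale_def fgen_def)
  also have "\<dots> = x q" using fin by (simp add: sum.delta' fsupp_def)
  finally show "x q = (\<Sum>p\<in>fsupp x. fscale (x p) (fgen p)) q" by simp
qed

lemma fpush_expand:
  fixes x :: "'a \<Rightarrow> 'r::comm_ring_1"
  assumes "x \<in> free_elems"
  shows "fpush h x = (\<Sum>p\<in>fsupp x. fscale (x p) (fgen (h p)))"
proof
  fix q
  have fin: "finite (fsupp x)" using assms by (simp add: free_elems_def)
  have "(\<Sum>p\<in>fsupp x. fscale (x p) (fgen (h p))) q = (\<Sum>p\<in>fsupp x. (if h p = q then x p else 0))"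
    unfolding sum_fun_apply by (rule sum.cong) (auto simp: fscale_def fgen_def)
  also have "\<dots> = (\<Sum>p\<in>{p \<in> fsupp x. h p = q}. x p)"
    using fin by (simp add: sum.inter_filter)
  finally show "fpush h x q = (\<Sum>p\<in>fsupp x. fscale (x p) (fgen (h p))) q"
    by (simp add: fpush_def)
qed

locale tens = M: fbasis sM id B + N: module sN
  for sM :: "'r::comm_ring_1 \<Rightarrow> 'm::ab_group_add \<Rightarrow> 'm" and B :: "'m set"
  and sN :: "'r \<Rightarrow> 'n::ab_group_add \<Rightarrow> 'n"
begin

sublocale F: module "fscale :: 'r \<Rightarrow> ('m \<times> 'n \<Rightarrow> 'r) \<Rightarrow> _"
  by (rule module_fscale)

abbreviation "Ker \<equiv> tensor_kernel sM sN"

definition phi :: "('m \<times> 'n \<Rightarrow> 'r) \<Rightarrow> 'm \<Rightarrow> 'n" where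
  "phi x b = (\<Sum>p\<in>fsupp x. sN (x p) (sN (M.coord (fst p) b) (snd p)))"

lemma phi_superset:
  assumes "finite S" "fsupp x \<subseteq> S"
  shows "phi x b = (\<Sum>p\<in>S. sN (x p) (sN (M.coord (fst p) b) (snd p)))"
  unfolding phi_def
  by (rule sum.mono_neutral_left) (use assms in \<open>auto simp: fsupp_def\<close>)

lemma phi_add:
  assumes "x \<in> free_elems" "y \<in> free_elems"
  shows "phi (x + y) b = phi x b + phi y b"
proof -
  let ?S = "fsupp x \<union> fsupp y"
  have fin: "finite ?S" using assms by (simp add: free_elems_def)
  have s: "fsupp (x + y) \<subseteq> ?S" by (auto simp: fsupp_def)
  show ?thesis
    using phi_superset[OF fin s] phi_superset[OF fin, of x] phi_superset[OF fin, of y]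
    by (simp add: N.scale_left_distrib sum.distrib distrib_right)
qed

lemma phi_scale:
  assumes "x \<in> free_elems"
  shows "phi (fscale c x) b = sN c (phi x b)"
proof -
  have fin: "finite (fsupp x)" using assms by (simp add: free_elems_def)
  have "phi (fscale c x) b = (\<Sum>p\<in>fsupp x. sN (fscale c x p) (sN (M.coord (fst p) b) (snd p)))"
    by (rule phi_superset[OF fin fsupp_scale])
  also have "\<dots> = sN c (phi x b)"
    by (simp add: phi_def fscale_def N.scale_sum_right mult.assoc)
  finally show ?thesis .
qed

lemma phi_zero: "phi 0 b = 0"
  by (simp add: phi_def fsupp_def)

lemma phi_uminus:
  assumes "x \<in> free_elems"
  shows "phi (- x) b = - phi x b"
proof -
  have "phi x b + phi (- x) b = 0"
    using phi_add[OF assms free_uminus[OF assms], of b] phi_zero[of b] by simp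
  then show ?thesis by (simp add: add_eq_0_iff)
qed

lemma phi_diff:
  assumes "x \<in> free_elems" "y \<in> free_elems"
  shows "phi (x - y) b = phi x b - phi y b"
  using phi_add[OF assms(1) free_uminus[OF assms(2)], of b] phi_uminus[OF assms(2), of b] by simp

lemma phi_gen: "phi (fgen p) b = sN (M.coord (fst p) b) (snd p)"
proof -
  have "phi (fgen p) b = (\<Sum>q\<in>{p}. sN (fgen p q) (sN (M.coord (fst q) b) (snd q)))"
    by (rule phi_superset) (auto simp: fsupp_def fgen_def)
  then show ?thesis by (simp add: fgen_def)
qed

lemma phi_sum:
  assumes "\<And>k. k \<in> A \<Longrightarrow> f k \<in> free_elems"
  shows "phi (sum f A) b = (\<Sum>k\<in>A. phi (f k) b)"
  using assms
proof (induct A rule: infinite_finite_induct)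
  case (insert a A)
  have "phi (sum f (insert a A)) b = phi (f a + sum f A) b"
    by (simp only: sum.insert[OF insert(1) insert(2)])
  also have "\<dots> = phi (f a) b + phi (sum f A) b"
    by (rule phi_add) (use insert in \<open>auto intro: free_sum\<close>)
  also have "\<dots> = phi (f a) b + (\<Sum>k\<in>A. phi (f k) b)"
    using insert by auto
  also have "\<dots> = (\<Sum>k\<in>insert a A. phi (f k) b)"
    by (simp only: sum.insert[OF insert(1) insert(2)])
  finally show ?case .
qed (auto simp: phi_zero)

lemma rel1: "fgen (m + m', n) - fgen (m, n) - fgen (m', n) \<in> Ker"
  unfolding tensor_kernel_def by (rule F.span_base, unfold tensor_rels_def) blast
lemma rel2: "fgen (m, n + n') - fgen (m, n) - fgen (m, n') \<in> Ker"
  unfolding tensor_kernel_def by (rule F.span_base, unfold tensor_rels_def) blast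
lemma rel3: "fgen (sM c m, n) - fscale c (fgen (m, n)) \<in> Ker"
  unfolding tensor_kernel_def by (rule F.span_base, unfold tensor_rels_def) blast
lemma rel4: "fgen (m, sN c n) - fscale c (fgen (m, n)) \<in> Ker"
  unfolding tensor_kernel_def by (rule F.span_base, unfold tensor_rels_def) blast

lemma Ker_sub: "F.subspace Ker"
  unfolding tensor_kernel_def by simp

lemma Ker_add: "x \<in> Ker \<Longrightarrow> y \<in> Ker \<Longrightarrow> x + y \<in> Ker"
  using F.subspace_add[OF Ker_sub] .
lemma Ker_diff: "x \<in> Ker \<Longrightarrow> y \<in> Ker \<Longrightarrow> x - y \<in> Ker"
  using F.subspace_diff[OF Ker_sub] .
lemma Ker_neg: "x \<in> Ker \<Longrightarrow> - x \<in> Ker"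
  using F.subspace_neg[OF Ker_sub] .
lemma Ker_zero: "0 \<in> Ker"
  using F.subspace_0[OF Ker_sub] .
lemma Ker_scale: "x \<in> Ker \<Longrightarrow> fscale c x \<in> Ker"
  using F.subspace_scale[OF Ker_sub] .
lemma Ker_sum: "(\<And>k. k \<in> A \<Longrightarrow> f k \<in> Ker) \<Longrightarrow> sum f A \<in> Ker"
  using F.subspace_sum[OF Ker_sub] .

lemma rels_prop: "r \<in> tensor_rels sM sN \<Longrightarrow> r \<in> free_elems \<and> (\<forall>b. phi r b = 0)"
  unfolding tensor_rels_def
  by (auto simp: free_diff free_gen free_scale phi_diff free_diff phi_gen phi_scale
      M.coord_add M.coord_scale N.scale_left_distrib N.scale_right_distrib mult.commute)

lemma Ker_prop: "x \<in> Ker \<Longrightarrow> x \<in> free_elems \<and> (\<forall>b. phi x b = 0)"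
  unfolding tensor_kernel_def
proof (induct rule: F.span_induct_alt)
  case base
  show ?case using free_zero phi_zero by metis
next
  case (step c x y)
  have fx: "x \<in> free_elems" "\<And>b. phi x b = 0" using rels_prop[OF step(1)] by auto
  have fy: "y \<in> free_elems" "\<And>b. phi y b = 0" using step(2) by auto
  have fs: "fscale c x \<in> free_elems" using free_scale[OF fx(1)] .
  have "phi (fscale c x + y) b = 0" for b
    using phi_add[OF fs fy(1), of b] phi_scale[OF fx(1), of c b] fx(2) fy(2) by simp
  then show ?case using free_add[OF fs fy(1)] by blast
qed

lemma gen0: "fgen (m, 0) \<in> Ker"
  using Ker_neg[OF rel2[of m 0 0]] by simp

lemma gen0': "fgen (0, n) \<in> Ker"
  using Ker_neg[OF rel1[of 0 0 n]] by simp

end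




lemma grp1: "(a::'x::ab_group_add) - (b + c) = (a - b - w) + (w - c)"
  by (simp add: algebra_simps)
lemma grp2: "((x::'x::ab_group_add) + x') - (y + y') = (x - y) + (x' - y')"
  by (simp add: algebra_simps)
lemma grp3: "(x::'x::ab_group_add) - z = (x - y) + (y - z)"
  by (simp add: algebra_simps)

context tens
begin

lemma Ker_trans: "x - y \<in> Ker \<Longrightarrow> y - z \<in> Ker \<Longrightarrow> x - z \<in> Ker"
proof -
  assume a: "x - y \<in> Ker" "y - z \<in> Ker"
  have eq: "x - z = (x - y) + (y - z)" by (rule grp3)
  show ?thesis unfolding eq by (rule Ker_add[OF a])
qed

lemma Ker_sym: "x - y \<in> Ker \<Longrightarrow> y - x \<in> Ker"
  using Ker_neg[of "x - y"] by (simp only: minus_diff_eq)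

lemma Ker_sums:
  assumes "\<And>b. b \<in> S \<Longrightarrow> X b - Y b \<in> Ker"
  shows "(\<Sum>b\<in>S. X b) - (\<Sum>b\<in>S. Y b) \<in> Ker"
proof -
  have eq: "(\<Sum>b\<in>S. X b) - (\<Sum>b\<in>S. Y b) = (\<Sum>b\<in>S. X b - Y b)" by (rule sum_subtractf[symmetric])
  show ?thesis unfolding eq by (rule Ker_sum, rule assms)
qed

lemma Ker_addD:
  assumes "x - y \<in> Ker" "x' - y' \<in> Ker"
  shows "(x + x') - (y + y') \<in> Ker"
proof -
  have eq: "(x + x') - (y + y') = (x - y) + (x' - y')" by (rule grp2)
  show ?thesis unfolding eq by (rule Ker_add[OF assms])
qed

lemma gen_sum1:
  assumes "finite S"
  shows "fgen (\<Sum>b\<in>S. h b, n) - (\<Sum>b\<in>S. fgen (h b, n)) \<in> Ker"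
  using assms
proof (induct S rule: finite_induct)
  case empty
  show ?case by (simp only: sum.empty diff_zero gen0')
next
  case (insert a S)
  let ?A = "fgen (h a + (\<Sum>b\<in>S. h b), n) :: 'm \<times> 'n \<Rightarrow> 'r"
  let ?B = "fgen (h a, n)"
  let ?W = "fgen (\<Sum>b\<in>S. h b, n)"
  let ?C = "\<Sum>b\<in>S. fgen (h b, n)"
  have eq: "?A - (?B + ?C) = (?A - ?B - ?W) + (?W - ?C)" by (rule grp1)
  have "?A - (?B + ?C) \<in> Ker"
    unfolding eq by (rule Ker_add[OF rel1 insert(3)])
  then show ?case by (simp only: sum.insert[OF insert(1) insert(2)])
qed

lemma gen_sum2:
  shows "(\<Sum>b\<in>S. fgen (b, f b)) + (\<Sum>b\<in>S. fgen (b, f' b)) - (\<Sum>b\<in>S. fgen (b, f b + f' b)) \<in> Ker"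
proof -
  have "(\<Sum>b\<in>S. fgen (b, f b + f' b)) - ((\<Sum>b\<in>S. fgen (b, f b)) + (\<Sum>b\<in>S. fgen (b, f' b)))
        = (\<Sum>b\<in>S. fgen (b, f b + f' b) - fgen (b, f b) - (fgen (b, f' b) :: 'm \<times> 'n \<Rightarrow> 'r))"
    by (simp only: sum_subtractf diff_diff_eq sum.distrib)
  also have "\<dots> \<in> Ker" by (rule Ker_sum) (rule rel2)
  finally show ?thesis by (rule Ker_sym)
qed

lemma pad:
  assumes "finite S'" "S \<subseteq> S'" "\<And>b. b \<in> S' - S \<Longrightarrow> f b = 0"
  shows "(\<Sum>b\<in>S'. fgen (b, f b)) - (\<Sum>b\<in>S. fgen (b, f b)) \<in> Ker"
proof -
  have e: "(\<Sum>b\<in>S'. fgen (b, f b)) = (\<Sum>b\<in>S' - S. fgen (b, f b)) + (\<Sum>b\<in>S. fgen (b, f b) :: 'm \<times> 'n \<Rightarrow> 'r)"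
    by (rule sum.subset_diff[OF assms(2,1)])
  have "(\<Sum>b\<in>S'. fgen (b, f b)) - (\<Sum>b\<in>S. fgen (b, f b)) = (\<Sum>b\<in>S' - S. fgen (b, f b) :: 'm \<times> 'n \<Rightarrow> 'r)"
    unfolding e by (rule add_diff_cancel)
  also have "\<dots> \<in> Ker"
  proof (rule Ker_sum)
    fix b assume "b \<in> S' - S"
    then have "f b = 0" by (rule assms(3))
    then show "fgen (b, f b) \<in> Ker" by (simp only: gen0)
  qed
  finally show ?thesis .
qed

definition NFp where
  "NFp x S \<longleftrightarrow> finite S \<and> (\<forall>b. b \<notin> S \<longrightarrow> phi x b = 0) \<and> x - (\<Sum>b\<in>S. fgen (b, phi x b)) \<in> Ker"

lemma NFpD1: "NFp x S \<Longrightarrow> finite S"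
  unfolding NFp_def by (elim conjE)
lemma NFpD2: "NFp x S \<Longrightarrow> b \<notin> S \<Longrightarrow> phi x b = 0"
  unfolding NFp_def by (elim conjE allE impE)
lemma NFpD3: "NFp x S \<Longrightarrow> x - (\<Sum>b\<in>S. fgen (b, phi x b)) \<in> Ker"
  unfolding NFp_def by (elim conjE)
lemma NFpI: "finite S \<Longrightarrow> (\<And>b. b \<notin> S \<Longrightarrow> phi x b = 0) \<Longrightarrow> x - (\<Sum>b\<in>S. fgen (b, phi x b)) \<in> Ker \<Longrightarrow> NFp x S"
  unfolding NFp_def by blast

lemma NF_gen: "\<exists>S. NFp (fscale c (fgen (m, n))) S"
proof -
  let ?S = "fsupp (M.coord m) \<inter> B"
  have fin: "finite ?S" using M.coord_fin by auto
  have sub: "fsupp (M.coord m) \<subseteq> ?S" using M.coord_J by (auto simp: fsupp_def)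
  have ph: "phi (fscale c (fgen (m, n))) b = sN c (sN (M.coord m b) n)" for b
    using phi_scale[OF free_gen] phi_gen by simp
  have out: "b \<notin> ?S \<Longrightarrow> phi (fscale c (fgen (m, n))) b = 0" for b
    using M.coord_J ph by (auto simp: fsupp_def)
  have mrep: "m = (\<Sum>b\<in>?S. sM (M.coord m b) b)"
    using M.coord_repr[OF fin sub] unfolding id_apply .
  have s1: "fscale c (fgen (m, n)) - fgen (m, sN c n) \<in> Ker"
    using Ker_sym[OF rel4] .
  have eqfg: "fgen (m, sN c n) = (fgen (\<Sum>b\<in>?S. sM (M.coord m b) b, sN c n) :: 'm \<times> 'n \<Rightarrow> 'r)"
    by (subst mrep[symmetric]) (rule refl)
  have s2': "fgen (\<Sum>b\<in>?S. sM (M.coord m b) b, sN c n) - (\<Sum>b\<in>?S. fgen (sM (M.coord m b) b, sN c n)) \<in> Ker"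
    by (rule gen_sum1[OF fin])
  have s2: "fgen (m, sN c n) - (\<Sum>b\<in>?S. fgen (sM (M.coord m b) b, sN c n)) \<in> Ker"
    unfolding eqfg by (rule s2')
  have s3: "(\<Sum>b\<in>?S. fgen (sM (M.coord m b) b, sN c n))
     - (\<Sum>b\<in>?S. fgen (b, sN (M.coord m b) (sN c n))) \<in> Ker"
    by (rule Ker_sums, rule Ker_trans[OF rel3 Ker_sym[OF rel4]])
  have e: "sN (M.coord m b) (sN c n) = phi (fscale c (fgen (m, n))) b" for b
    using ph by (simp add: mult.commute)
  have "NFp (fscale c (fgen (m, n))) ?S"
  proof (rule NFpI[OF fin out])
    have eq: "(\<Sum>b\<in>?S. fgen (b, sN (M.coord m b) (sN c n))) = (\<Sum>b\<in>?S. fgen (b, phi (fscale c (fgen (m, n))) b))"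
      by (rule sum.cong[OF refl]) (simp only: e)
    from Ker_trans[OF s1 Ker_trans[OF s2 s3]]
    show "fscale c (fgen (m, n)) - (\<Sum>b\<in>?S. fgen (b, phi (fscale c (fgen (m, n))) b)) \<in> Ker"
      unfolding eq .
  qed
  then show ?thesis by blast
qed

lemma NF_sum:
  assumes "finite F"
  shows "\<exists>S. NFp (\<Sum>p\<in>F. fscale (c p) (fgen p)) S"
  using assms
proof (induct F rule: finite_induct)
  case empty
  have "NFp 0 {}" by (rule NFpI) (simp_all only: finite.emptyI phi_zero sum.empty diff_zero Ker_zero)
  then have "NFp (\<Sum>p\<in>{}. fscale (c p) (fgen p)) {}" by (simp only: sum.empty)
  then show ?case by blast
next
  case (insert a F)
  let ?X1 = "fscale (c a) (fgen a)"
  let ?X2 = "\<Sum>p\<in>F. fscale (c p) (fgen p)"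
  obtain S1 where S1: "NFp ?X1 S1" using NF_gen[of "c a" "fst a" "snd a"] by auto
  obtain S2 where S2: "NFp ?X2 S2" using insert(3) by auto
  let ?S = "S1 \<union> S2"
  have f1: "?X1 \<in> free_elems" by (rule free_scale[OF free_gen])
  have f2: "?X2 \<in> free_elems" by (rule free_sum) (rule free_scale[OF free_gen])
  have fin: "finite ?S" using NFpD1[OF S1] NFpD1[OF S2] by blast
  have ph: "phi (?X1 + ?X2) b = phi ?X1 b + phi ?X2 b" for b by (rule phi_add[OF f1 f2])
  have p1: "(\<Sum>b\<in>?S. fgen (b, phi ?X1 b)) - (\<Sum>b\<in>S1. fgen (b, phi ?X1 b)) \<in> Ker"
    by (rule pad[OF fin]) (auto intro: NFpD2[OF S1])
  have p2: "(\<Sum>b\<in>?S. fgen (b, phi ?X2 b)) - (\<Sum>b\<in>S2. fgen (b, phi ?X2 b)) \<in> Ker"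
    by (rule pad[OF fin]) (auto intro: NFpD2[OF S2])
  have a1: "?X1 - (\<Sum>b\<in>?S. fgen (b, phi ?X1 b)) \<in> Ker"
    by (rule Ker_trans[OF NFpD3[OF S1] Ker_sym[OF p1]])
  have a2: "?X2 - (\<Sum>b\<in>?S. fgen (b, phi ?X2 b)) \<in> Ker"
    by (rule Ker_trans[OF NFpD3[OF S2] Ker_sym[OF p2]])
  have a3: "(?X1 + ?X2) - ((\<Sum>b\<in>?S. fgen (b, phi ?X1 b)) + (\<Sum>b\<in>?S. fgen (b, phi ?X2 b))) \<in> Ker"
    by (rule Ker_addD[OF a1 a2])
  have a4: "(?X1 + ?X2) - (\<Sum>b\<in>?S. fgen (b, phi (?X1 + ?X2) b)) \<in> Ker"
    unfolding ph by (rule Ker_trans[OF a3 gen_sum2])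
  have out: "b \<notin> ?S \<Longrightarrow> phi (?X1 + ?X2) b = 0" for b
    unfolding ph using NFpD2[OF S1, of b] NFpD2[OF S2, of b] by simp
  have "NFp (?X1 + ?X2) ?S" by (rule NFpI[OF fin out a4])
  then show ?case unfolding sum.insert[OF insert(1) insert(2)] by blast
qed

lemma Ker_iff:
  assumes "x \<in> free_elems"
  shows "x \<in> Ker \<longleftrightarrow> (\<forall>b. phi x b = 0)"
proof
  assume "x \<in> Ker" then show "\<forall>b. phi x b = 0" using Ker_prop by blast
next
  assume z: "\<forall>b. phi x b = 0"
  have fin: "finite (fsupp x)" using assms by (simp add: free_elems_def)
  obtain S where S0: "NFp (\<Sum>p\<in>fsupp x. fscale (x p) (fgen p)) S"
    using NF_sum[OF fin, of x] by blast
  have S: "NFp x S" by (subst free_expand[OF assms]) (rule S0)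
  have k1: "x - (\<Sum>b\<in>S. fgen (b, phi x b)) \<in> Ker" by (rule NFpD3[OF S])
  then have k1: "x - (\<Sum>b\<in>S. fgen (b, 0)) \<in> Ker" by (simp only: z)
  have k2: "(\<Sum>b\<in>S. fgen (b, 0)) \<in> Ker" by (rule Ker_sum) (rule gen0)
  have "(x - (\<Sum>b\<in>S. fgen (b, 0))) + (\<Sum>b\<in>S. fgen (b, 0)) \<in> Ker" by (rule Ker_add[OF k1 k2])
  then show "x \<in> Ker" by (simp only: diff_add_cancel)
qed

lemma tcls_mem: "z \<in> tcls sM sN x \<longleftrightarrow> z \<in> free_elems \<and> x - z \<in> Ker"
  by (simp only: tcls_def mem_Collect_eq)

lemma tcls_self: "x \<in> free_elems \<Longrightarrow> x \<in> tcls sM sN x"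
  unfolding tcls_mem diff_self by (intro conjI Ker_zero)

lemma tcls_eq:
  assumes "x \<in> free_elems" "y \<in> free_elems"
  shows "tcls sM sN x = tcls sM sN y \<longleftrightarrow> (\<forall>b. phi x b = phi y b)"
proof
  assume eq: "tcls sM sN x = tcls sM sN y"
  have "y \<in> tcls sM sN x" unfolding eq by (rule tcls_self[OF assms(2)])
  then have "x - y \<in> Ker" unfolding tcls_mem by (rule conjunct2)
  then have "\<forall>b. phi (x - y) b = 0" by (rule iffD1[OF Ker_iff[OF free_diff[OF assms]]])
  then show "\<forall>b. phi x b = phi y b" unfolding phi_diff[OF assms] by simp
next
  assume "\<forall>b. phi x b = phi y b"
  then have "\<forall>b. phi (x - y) b = 0" unfolding phi_diff[OF assms] by simp
  then have k: "x - y \<in> Ker"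
    by (rule iffD2[OF Ker_iff[OF free_diff[OF assms]]])
  show "tcls sM sN x = tcls sM sN y"
  proof (rule set_eqI)
    fix z
    have "x - z \<in> Ker \<longleftrightarrow> y - z \<in> Ker"
    proof
      assume "x - z \<in> Ker" then show "y - z \<in> Ker" using Ker_trans[OF Ker_sym[OF k]] by blast
    next
      assume "y - z \<in> Ker" then show "x - z \<in> Ker" using Ker_trans[OF k] by blast
    qed
    then show "z \<in> tcls sM sN x \<longleftrightarrow> z \<in> tcls sM sN y" unfolding tcls_mem by blast
  qed
qed

lemma some_cls:
  assumes "x \<in> free_elems"
  shows "(SOME z. z \<in> tcls sM sN x) \<in> free_elems \<and> (\<forall>b. phi (SOME z. z \<in> tcls sM sN x) b = phi x b)"
proof -
  let ?z = "SOME z. z \<in> tcls sM sN x"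
  have "?z \<in> tcls sM sN x" by (rule someI[of "\<lambda>z. z \<in> tcls sM sN x", OF tcls_self[OF assms]])
  then have fz: "?z \<in> free_elems" and k: "x - ?z \<in> Ker" unfolding tcls_mem by blast+
  have "\<forall>b. phi (x - ?z) b = 0" using Ker_prop[OF k] by (rule conjunct2)
  then have "\<forall>b. phi ?z b = phi x b" unfolding phi_diff[OF assms fz] by simp
  then show ?thesis using fz by (rule conjI[rotated])
qed

end

locale tensD = tens sM B sN
  for sM :: "'r::comm_ring_1 \<Rightarrow> 'm::ab_group_add \<Rightarrow> 'm" and B :: "'m set"
  and sN :: "'r \<Rightarrow> 'n::ab_group_add \<Rightarrow> 'n" +
  fixes D :: "'n \<Rightarrow> 'n"
  assumes D_add: "\<And>x y. D (x + y) = D x + D y"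
    and D_scale: "\<And>c x. D (sN c x) = sN c (D x)"
begin

lemma D_zero: "D 0 = 0"
  using D_add[of 0 0] by simp

lemma D_sum: "D (\<Sum>k\<in>A. f k) = (\<Sum>k\<in>A. D (f k))"
  by (induct A rule: infinite_finite_induct) (auto simp: D_zero D_add)

abbreviation "hD \<equiv> (\<lambda>(m, n). (m, D n))"

lemma push_free:
  fixes x :: "'m \<times> 'n \<Rightarrow> 'r"
  assumes "x \<in> free_elems" shows "fpush hD x \<in> free_elems"
  unfolding fpush_expand[OF assms] by (intro free_sum free_scale free_gen)

lemma phi_push:
  assumes "x \<in> free_elems"
  shows "phi (fpush hD x) b = D (phi x b)"
proof -
  have "phi (fpush hD x) b = (\<Sum>p\<in>fsupp x. phi (fscale (x p) (fgen (hD p))) b)"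
    unfolding fpush_expand[OF assms] by (rule phi_sum) (intro free_scale free_gen)
  also have "\<dots> = (\<Sum>p\<in>fsupp x. sN (x p) (sN (M.coord (fst p) b) (D (snd p))))"
  proof (rule sum.cong[OF refl])
    fix p :: "'m \<times> 'n"
    obtain p1 p2 where pp: "p = (p1, p2)" by (cases p)
    show "phi (fscale (x p) (fgen (hD p))) b = sN (x p) (sN (M.coord (fst p) b) (D (snd p)))"
      unfolding pp by (simp only: phi_scale[OF free_gen] phi_gen case_prod_conv fst_conv snd_conv)
  qed
  also have "\<dots> = D (\<Sum>p\<in>fsupp x. sN (x p) (sN (M.coord (fst p) b) (snd p)))"
    by (simp only: D_sum D_scale)
  also have "\<dots> = D (phi x b)" by (simp only: phi_def)
  finally show ?thesis .
qed

lemma tim: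
  assumes "x \<in> free_elems" "y \<in> free_elems"
  shows "tensor_id_map sM sN D (tcls sM sN x) = tcls sM sN y \<longleftrightarrow> (\<forall>b. D (phi x b) = phi y b)"
proof -
  let ?z = "SOME z. z \<in> tcls sM sN x"
  have z1: "?z \<in> free_elems" by (rule conjunct1[OF some_cls[OF assms(1)]])
  have z2: "phi ?z b = phi x b" for b by (rule spec[OF conjunct2[OF some_cls[OF assms(1)]]])
  have e: "tensor_id_map sM sN D (tcls sM sN x) = tcls sM sN (fpush hD ?z)"
    unfolding tensor_id_map_def ..
  show ?thesis
    unfolding e tcls_eq[OF push_free[OF z1] assms(2)] phi_push[OF z1] z2 by (rule refl)
qed

end




context tensD
begin

lemma supp_phi:
  assumes "x \<in> free_elems"
  shows "\<exists>S. finite S \<and> S \<subseteq> B \<and> (\<forall>b. b \<notin> S \<longrightarrow> phi x b = 0)"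
proof -
  let ?S = "(\<Union>p\<in>fsupp x. fsupp (M.coord (fst p))) \<inter> B"
  have fin: "finite ?S" using assms M.coord_fin by (auto simp: free_elems_def)
  have "phi x b = 0" if b: "b \<notin> ?S" for b
  proof -
    have "M.coord (fst p) b = 0" if "p \<in> fsupp x" for p
    proof (cases "b \<in> B")
      case True
      have "b \<notin> fsupp (M.coord (fst p))" using b that True by blast
      then show ?thesis unfolding fsupp_def by blast
    next
      case False
      then show ?thesis by (rule M.coord_J)
    qed
    then show ?thesis unfolding phi_def by (simp add: N.scale_zero_left)
  qed
  then show ?thesis using fin by blast
qed

lemma surj_lemma:
  assumes x: "x \<in> free_elems" and hk: "\<And>b. \<exists>k. phi x b = sN k u"
  shows "\<exists>m. tcls sM sN x = tpure sM sN m u"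
proof -
  obtain S where S: "finite S" "S \<subseteq> B" "\<And>b. b \<notin> S \<Longrightarrow> phi x b = 0"
    using supp_phi[OF x] by blast
  define k where "k b = (SOME k. phi x b = sN k u)" for b
  have kk: "phi x b = sN (k b) u" for b
    unfolding k_def using hk[of b] by (rule someI_ex)
  define m where "m = (\<Sum>b\<in>S. sM (k b) (id b))"
  have cm: "M.coord m = (\<lambda>i. if i \<in> S then k i else 0)"
    by (rule M.coord_char[OF S(1) S(2) m_def])
  have "tcls sM sN x = tcls sM sN (fgen (m, u))"
  proof (subst tcls_eq[OF x free_gen], intro allI)
    fix b
    show "phi x b = phi (fgen (m, u)) b"
      unfolding phi_gen fst_conv snd_conv cm using kk S(3) by simp
  qed
  then show ?thesis unfolding tpure_def by blast
qed

lemma tpure_inj: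
  assumes uinj: "\<And>k. sN k u = 0 \<Longrightarrow> k = 0"
  shows "inj (\<lambda>m. tpure sM sN m u)"
proof (rule injI)
  fix m m'
  assume "tpure sM sN m u = tpure sM sN m' u"
  then have "\<forall>b. phi (fgen (m, u)) b = phi (fgen (m', u)) b"
    unfolding tpure_def by (rule iffD1[OF tcls_eq[OF free_gen free_gen]])
  then have "\<forall>b. sN (M.coord m b) u = sN (M.coord m' b) u"
    unfolding phi_gen fst_conv snd_conv .
  then have "\<forall>b. sN (M.coord m b - M.coord m' b) u = 0"
    by (simp add: N.scale_left_diff_distrib)
  then have "\<forall>b. M.coord m b - M.coord m' b = 0" using uinj by blast
  then have "M.coord (m - m') = (\<lambda>i. 0)" unfolding M.coord_diff by simp
  then have "m - m' = 0" by (rule M.coord_eq0)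
  then show "m = m'" by simp
qed

lemma in_space: "x \<in> free_elems \<Longrightarrow> tcls sM sN x \<in> tensor_space sM sN"
  unfolding tensor_space_def by (rule imageI)

lemma space_E: "C \<in> tensor_space sM sN \<Longrightarrow> \<exists>x. x \<in> free_elems \<and> C = tcls sM sN x"
  unfolding tensor_space_def by blast

theorem G0:
  assumes char: "\<And>n. D n = 0 \<longleftrightarrow> (\<exists>k. n = sN k u)"
    and uinj: "\<And>k. sN k u = 0 \<Longrightarrow> k = 0"
  shows "{C \<in> tensor_space sM sN. tensor_id_map sM sN D C = tcls sM sN 0}
           = range (\<lambda>m. tpure sM sN m u) \<and> inj (\<lambda>m. tpure sM sN m u)"
proof
  have Du: "D u = 0" using char[of u] N.scale_one[of u] by metis
  show "inj (\<lambda>m. tpure sM sN m u)" by (rule tpure_inj[OF uinj])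
  show "{C \<in> tensor_space sM sN. tensor_id_map sM sN D C = tcls sM sN 0} = range (\<lambda>m. tpure sM sN m u)"
  proof (rule set_eqI, rule iffI)
    fix C assume "C \<in> {C \<in> tensor_space sM sN. tensor_id_map sM sN D C = tcls sM sN 0}"
    then have C1: "C \<in> tensor_space sM sN" and C2: "tensor_id_map sM sN D C = tcls sM sN 0" by auto
    obtain x where x: "x \<in> free_elems" "C = tcls sM sN x" using space_E[OF C1] by blast
    have "\<forall>b. D (phi x b) = phi 0 b"
      using C2 unfolding x(2) by (rule iffD1[OF tim[OF x(1) free_zero]])
    then have "\<And>b. \<exists>k. phi x b = sN k u" using char phi_zero by simp
    then obtain m where "tcls sM sN x = tpure sM sN m u" using surj_lemma[OF x(1)] by blast
    then show "C \<in> range (\<lambda>m. tpure sM sN m u)" using x(2) by auto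
  next
    fix C assume "C \<in> range (\<lambda>m. tpure sM sN m u)"
    then obtain m where m: "C = tcls sM sN (fgen (m, u))" unfolding tpure_def by blast
    have "tensor_id_map sM sN D C = tcls sM sN 0"
      unfolding m
    proof (rule iffD2[OF tim[OF free_gen free_zero]], intro allI)
      fix b show "D (phi (fgen (m, u)) b) = phi 0 b"
        unfolding phi_gen phi_zero fst_conv snd_conv D_scale Du by simp
    qed
    then show "C \<in> {C \<in> tensor_space sM sN. tensor_id_map sM sN D C = tcls sM sN 0}"
      using in_space[OF free_gen] m by auto
  qed
qed

theorem G1:
  assumes char: "\<And>n. D n = n \<longleftrightarrow> (\<exists>k. n = sN k u)"
    and uinj: "\<And>k. sN k u = 0 \<Longrightarrow> k = 0"
  shows "{C \<in> tensor_space sM sN. tensor_id_map sM sN D C = C}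
           = range (\<lambda>m. tpure sM sN m u) \<and> inj (\<lambda>m. tpure sM sN m u)"
proof
  have Du: "D u = u" using char[of u] N.scale_one[of u] by metis
  show "inj (\<lambda>m. tpure sM sN m u)" by (rule tpure_inj[OF uinj])
  show "{C \<in> tensor_space sM sN. tensor_id_map sM sN D C = C} = range (\<lambda>m. tpure sM sN m u)"
  proof (rule set_eqI, rule iffI)
    fix C assume "C \<in> {C \<in> tensor_space sM sN. tensor_id_map sM sN D C = C}"
    then have C1: "C \<in> tensor_space sM sN" and C2: "tensor_id_map sM sN D C = C" by auto
    obtain x where x: "x \<in> free_elems" "C = tcls sM sN x" using space_E[OF C1] by blast
    have "tensor_id_map sM sN D (tcls sM sN x) = tcls sM sN x" using C2 x(2) by simp
    then have "\<forall>b. D (phi x b) = phi x b"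
      by (rule iffD1[OF tim[OF x(1) x(1)]])
    then have "\<And>b. \<exists>k. phi x b = sN k u" using char by simp
    then obtain m where "tcls sM sN x = tpure sM sN m u" using surj_lemma[OF x(1)] by blast
    then show "C \<in> range (\<lambda>m. tpure sM sN m u)" using x(2) by auto
  next
    fix C assume "C \<in> range (\<lambda>m. tpure sM sN m u)"
    then obtain m where m: "C = tcls sM sN (fgen (m, u))" unfolding tpure_def by blast
    have "tensor_id_map sM sN D C = C"
      unfolding m
    proof (rule iffD2[OF tim[OF free_gen free_gen]], intro allI)
      fix b show "D (phi (fgen (m, u)) b) = phi (fgen (m, u)) b"
        unfolding phi_gen fst_conv snd_conv D_scale Du ..
    qed
    then show "C \<in> {C \<in> tensor_space sM sN. tensor_id_map sM sN D C = C}"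
      using in_space[OF free_gen] m by auto
  qed
qed

end




lemma fbasis_of_basis:
  assumes m: "module s" and ind: "\<not> module.dependent s B" and sp: "module.span s B = UNIV"
  shows "fbasis s id B"
proof -
  interpret module s by (rule m)
  show ?thesis
  proof (unfold_locales)
    fix x
    have "x \<in> span B" using sp by simp
    then obtain S r where "finite S" "S \<subseteq> B" "x = (\<Sum>a\<in>S. s (r a) a)"
      unfolding span_explicit by blast
    then show "\<exists>S c. finite S \<and> S \<subseteq> B \<and> x = (\<Sum>i\<in>S. s (c i) (id i))" by auto
  next
    fix S c i
    assume "finite S" "S \<subseteq> B" "(\<Sum>i\<in>S. s (c i) (id i)) = 0" "i \<in> S"
    then show "c i = 0" using ind unfolding dependent_explicit by auto
  qed
qed

locale rhom =
  fixes f :: "'x::comm_ring_1 \<Rightarrow> 'y::comm_ring_1"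
  assumes h: "is_ring_hom f"
begin
lemma add: "f (x + y) = f x + f y" using h by (simp add: is_ring_hom_def)
lemma mult: "f (x * y) = f x * f y" using h by (simp add: is_ring_hom_def)
lemma one: "f 1 = 1" using h by (simp add: is_ring_hom_def)
lemma zero: "f 0 = 0" using add[of 0 0] by simp
lemma uminus: "f (- x) = - f x" using add[of x "- x"] zero by (simp add: add_eq_0_iff)
lemma diff: "f (x - y) = f x - f y" using add[of x "- y"] uminus[of y] by simp
lemma of_nat: "f (of_nat n) = of_nat n" by (induct n) (simp_all add: zero one add)
lemma sum: "f (\<Sum>i\<in>A. g i) = (\<Sum>i\<in>A. f (g i))"
  by (induct A rule: infinite_finite_induct) (simp_all add: zero add)
lemma power: "f (x ^ n) = f x ^ n" by (induct n) (simp_all add: one mult)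
end

locale Eset =
  fixes emb :: "'k::field_char_0 \<Rightarrow> 'a::comm_ring_1" and t :: 'a and d :: "'a \<Rightarrow> 'a"
    and R :: "'k set" and \<gamma> :: "'k \<Rightarrow> 'k"
    and \<iota> :: "'a \<Rightarrow> 'e::comm_ring_1" and T :: "'k \<Rightarrow> 'e" and l :: 'e
    and dE :: "'e \<Rightarrow> 'e" and \<sigma> :: "'e \<Rightarrow> 'e"
  assumes cl: "contains_laurent emb t"
    and der: "is_derivation d" and ext: "extends_tddt emb t d"
    and reps: "reps_KZ R"
    and nel: "no_exp_no_log emb R d"
    and gi: "gamma_iso \<gamma>"
    and EA: "is_E_A emb t R \<iota> T l"
    and ED: "is_E_derivation emb d \<iota> T l dE"
    and ES: "is_E_sigma emb \<gamma> \<iota> T l \<sigma>"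
begin

sublocale e: rhom emb using cl by unfold_locales (simp add: contains_laurent_def)
sublocale i: rhom \<iota> using EA by unfold_locales (simp add: is_E_A_def)
sublocale s: rhom \<sigma> using ES by unfold_locales (simp add: is_E_sigma_def)

lemma emb_inj: "inj emb" using cl by (simp add: contains_laurent_def)

lemma d_add: "d (x + y) = d x + d y" using der by (simp add: is_derivation_def)
lemma d_mult: "d (x * y) = d x * y + x * d y" using der by (simp add: is_derivation_def)
lemma d_zero: "d 0 = 0" using d_add[of 0 0] by simp
lemma d_uminus: "d (- x) = - d x" using d_add[of x "- x"] d_zero by (simp add: add_eq_0_iff)

lemma dE_add: "dE (x + y) = dE x + dE y" using ED by (simp add: is_E_derivation_def is_derivation_def)
lemma dE_mult: "dE (x * y) = dE x * y + x * dE y" using ED by (simp add: is_E_derivation_def is_derivation_def)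
lemma dE_iota: "dE (\<iota> f) = \<iota> (d f)" using ED by (simp add: is_E_derivation_def)
lemma dE_T: "dE (T a) = \<iota> (emb a) * T a" using ED by (simp add: is_E_derivation_def)
lemma dE_l: "dE l = 1" using ED by (simp add: is_E_derivation_def)
lemma dE_zero: "dE 0 = 0" using dE_add[of 0 0] by simp
lemma dE_one: "dE 1 = 0" using dE_mult[of 1 1] by simp
lemma dE_sum: "dE (\<Sum>i\<in>A. g i) = (\<Sum>i\<in>A. dE (g i))"
  by (induct A rule: infinite_finite_induct) (simp_all add: dE_zero dE_add)

lemma sig_iota: "\<sigma> (\<iota> f) = \<iota> f" using ES by (simp add: is_E_sigma_def)
lemma sig_T: "\<sigma> (T a) = \<iota> (emb (\<gamma> a)) * T a" using ES by (simp add: is_E_sigma_def)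
lemma sig_l: "\<sigma> l = l + 1" using ES by (simp add: is_E_sigma_def)

lemma lpow0: "lpow t 0 = 1" by (simp add: lpow_def)

lemma T0: "T 0 = 1"
proof -
  have "\<forall>n::int. T (of_int n) = \<iota> (lpow t n)" using EA unfolding is_E_A_def by blast
  then have "T (of_int 0) = \<iota> (lpow t 0)" by blast
  then show ?thesis by (simp add: lpow0 i.one)
qed

lemma d_emb: "d (emb k) = 0"
proof -
  have h: "finite S \<Longrightarrow> d (\<Sum>n\<in>S. emb (c n) * lpow t n) = (\<Sum>n\<in>S. emb (of_int n * c n) * lpow t n)" for c S
    using ext unfolding extends_tddt_def by (elim allE impE)
  have "d (emb k * lpow t 0) = emb (of_int 0 * k) * lpow t 0"
    using h[of "{0}" "\<lambda>_. k"] by simp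
  then show ?thesis by (simp add: lpow0 e.zero)
qed

lemma d_emb_mult: "d (emb k * y) = emb k * d y"
  by (simp add: d_mult d_emb)

lemma emb_cancel: "k \<noteq> 0 \<Longrightarrow> emb k * y = 0 \<Longrightarrow> y = 0"
proof -
  assume k: "k \<noteq> 0" and z: "emb k * y = 0"
  have "emb (inverse k) * (emb k * y) = emb (inverse k * k) * y" by (simp add: e.mult mult.assoc)
  then show "y = 0" using k z by (simp add: e.one)
qed

lemma of_nat_emb: "(of_nat n :: 'a) = emb (of_nat n)" by (simp add: e.of_nat)

lemma nat_cancel: "n \<noteq> 0 \<Longrightarrow> of_nat n * (y :: 'a) = 0 \<Longrightarrow> y = 0"
  unfolding of_nat_emb by (rule emb_cancel) simp_all

lemma EA_span: "\<exists>S c. finite S \<and> S \<subseteq> R \<times> UNIV \<and> x = (\<Sum>(a, n)\<in>S. \<iota> (c a n) * T a * l ^ n)"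
  using EA by (simp add: is_E_A_def)

lemma EA_indep: "finite S \<Longrightarrow> S \<subseteq> R \<times> UNIV \<Longrightarrow> (\<Sum>(a, n)\<in>S. \<iota> (c a n) * T a * l ^ n) = 0
   \<Longrightarrow> (a, n) \<in> S \<Longrightarrow> c a n = 0"
  using EA unfolding is_E_A_def by blast

lemma sum_conv: "(\<Sum>i\<in>S. \<iota> (c i) * (case i of (a, n) \<Rightarrow> T a * l ^ n)) = (\<Sum>(a, n)\<in>S. \<iota> (c (a, n)) * T a * l ^ n)"
  by (rule sum.cong) (auto simp: mult.assoc)

sublocale Eb: fbasis "\<lambda>f x. \<iota> f * x" "\<lambda>(a, n). T a * l ^ n" "R \<times> UNIV"
proof unfold_locales
  fix a b :: 'a and x y :: 'e
  show "\<iota> a * (x + y) = \<iota> a * x + \<iota> a * y" by (simp add: distrib_left)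
  show "\<iota> (a + b) * x = \<iota> a * x + \<iota> b * x" by (simp add: i.add distrib_right)
  show "\<iota> a * (\<iota> b * x) = \<iota> (a * b) * x" by (simp add: i.mult mult.assoc)
  show "\<iota> 1 * x = x" by (simp only: i.one mult_1_left)
next
  fix x
  from EA_span[of x] obtain S c where SC: "finite S \<and> S \<subseteq> R \<times> UNIV \<and> x = (\<Sum>(a, n)\<in>S. \<iota> (c a n) * T a * l ^ n)"
    by (elim exE)
  then show "\<exists>S c. finite S \<and> S \<subseteq> R \<times> UNIV \<and> x = (\<Sum>i\<in>S. \<iota> (c i) * (case i of (a, n) \<Rightarrow> T a * l ^ n))"
    by (intro exI[of _ S] exI[of _ "\<lambda>(a, n). c a n"]) (simp add: sum_conv)
next
  fix S c i
  assume "finite S" "S \<subseteq> R \<times> UNIV" "(\<Sum>i\<in>S. \<iota> (c i) * (case i of (a, n) \<Rightarrow> T a * l ^ n)) = 0" "i \<in> S"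
  then show "c i = 0"
    using EA_indep[of S "\<lambda>a n. c (a, n)" "fst i" "snd i"] by (simp add: sum_conv)
qed

abbreviation "g \<equiv> (\<lambda>(a, n). T a * l ^ n)"
abbreviation "co \<equiv> Eb.coord"

lemma iota_inj0: "\<iota> f = 0 \<Longrightarrow> f = 0"
  using EA_indep[of "{(0, 0)}" "\<lambda>_ _. f" 0 0] reps by (simp add: T0 reps_KZ_def)

end




lemma sum_delta_F:
  assumes "finite F" "q \<notin> F \<Longrightarrow> h q = 0"
  shows "(\<Sum>p\<in>F. if p = q then h p else 0) = h q"
  using assms by (simp add: sum.delta')

lemma maxdeg:
  fixes c :: "'x \<times> nat \<Rightarrow> 'y::zero"
  assumes "finite (fsupp c)" "c (a, j) \<noteq> 0"
  shows "\<exists>N. j \<le> N \<and> c (a, N) \<noteq> 0 \<and> (\<forall>m. N < m \<longrightarrow> c (a, m) = 0)"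
proof -
  let ?M = "{m. c (a, m) \<noteq> 0}"
  have "?M \<subseteq> snd ` fsupp c" by (force simp: fsupp_def)
  then have fin: "finite ?M" using assms(1) finite_subset by blast
  have jM: "j \<in> ?M" using assms(2) by simp
  have "j \<le> Max ?M" using fin jM by (rule Max_ge)
  moreover have "Max ?M \<in> ?M" using fin jM by (intro Max_in) auto
  moreover have "c (a, m) = 0" if "Max ?M < m" for m
  proof (rule ccontr)
    assume "c (a, m) \<noteq> 0"
    then have "m \<le> Max ?M" using fin by (intro Max_ge) auto
    then show False using that by simp
  qed
  ultimately show ?thesis by blast
qed

context Eset
begin

lemma cgen: "a \<in> R \<Longrightarrow> co (T a * l ^ n) = (\<lambda>i. if i = (a, n) then 1 else 0)"
  using Eb.coord_gen[of "(a, n)"] by simp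

lemma cscale: "co (\<iota> f * x) = (\<lambda>i. f * co x i)"
  by (rule Eb.coord_scale)

lemma x_repr: "x = (\<Sum>p\<in>fsupp (co x). \<iota> (co x p) * (T (fst p) * l ^ snd p))"
proof -
  have "x = (\<Sum>p\<in>fsupp (co x). \<iota> (co x p) * g p)"
    by (rule Eb.coord_repr[OF Eb.coord_fin subset_refl])
  also have "\<dots> = (\<Sum>p\<in>fsupp (co x). \<iota> (co x p) * (T (fst p) * l ^ snd p))"
    by (rule sum.cong) (auto split: prod.splits)
  finally show ?thesis .
qed

lemma suppJ: "p \<in> fsupp (co x) \<Longrightarrow> fst p \<in> R"
  using Eb.coord_J[of p x] by (cases p) (auto simp: fsupp_def)

lemma co_zero_out: "p \<notin> fsupp (co x) \<Longrightarrow> co x p = 0"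
  by (simp add: fsupp_def)

lemma dE_lpow: "dE (l ^ n) = of_nat n * l ^ (n - 1)"
proof (induct n)
  case 0 then show ?case by (simp add: dE_one)
next
  case (Suc n)
  show ?case
  proof (cases n)
    case 0 then show ?thesis by (simp add: dE_l)
  next
    case (Suc k)
    have "dE (l ^ Suc n) = dE (l * l ^ n)" by simp
    also have "\<dots> = l ^ n + l * (of_nat n * l ^ (n - 1))" by (simp add: dE_mult dE_l Suc.hyps)
    also have "\<dots> = of_nat (Suc n) * l ^ n" using Suc by (simp add: algebra_simps)
    finally show ?thesis by simp
  qed
qed

lemma co_dE_gen:
  assumes a: "a \<in> R"
  shows "co (dE (\<iota> f * (T a * l ^ n))) q =
     (if q = (a, n) then d f + f * emb a else 0) + (if q = (a, n - 1) then f * of_nat n else 0)"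
proof -
  have "dE (\<iota> f * (T a * l ^ n)) = \<iota> (d f + f * emb a) * (T a * l ^ n) + \<iota> (f * of_nat n) * (T a * l ^ (n - 1))"
    by (simp add: dE_mult dE_iota dE_T dE_lpow i.add i.mult i.of_nat algebra_simps)
  then show ?thesis
    by (simp add: Eb.coord_add cscale cgen[OF a])
qed

lemma CD:
  "co (dE x) (b, j) = d (co x (b, j)) + co x (b, j) * emb b + co x (b, Suc j) * of_nat (Suc j)"
proof -
  let ?c = "co x" and ?F = "fsupp (co x)"
  have fin: "finite ?F" by (rule Eb.coord_fin)
  have "dE x = (\<Sum>p\<in>?F. dE (\<iota> (?c p) * (T (fst p) * l ^ snd p)))"
    by (subst x_repr) (simp add: dE_sum)
  then have "co (dE x) (b, j) = (\<Sum>p\<in>?F. co (dE (\<iota> (?c p) * (T (fst p) * l ^ snd p))) (b, j))"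
    by (simp add: Eb.coord_sum)
  also have "\<dots> = (\<Sum>p\<in>?F. (if p = (b, j) then d (?c p) + ?c p * emb (fst p) else 0)
                     + (if p = (b, Suc j) then ?c p * of_nat (snd p) else 0))"
  proof (rule sum.cong[OF refl])
    fix p assume p: "p \<in> ?F"
    obtain a n where pp: "p = (a, n)" by (cases p)
    have aR: "a \<in> R" using suppJ[OF p] pp by simp
    show "co (dE (\<iota> (?c p) * (T (fst p) * l ^ snd p))) (b, j) =
      (if p = (b, j) then d (?c p) + ?c p * emb (fst p) else 0) + (if p = (b, Suc j) then ?c p * of_nat (snd p) else 0)"
      unfolding pp fst_conv snd_conv co_dE_gen[OF aR] by (cases n) auto
  qed
  also have "\<dots> = (\<Sum>p\<in>?F. if p = (b, j) then d (?c p) + ?c p * emb (fst p) else 0)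
                 + (\<Sum>p\<in>?F. if p = (b, Suc j) then ?c p * of_nat (snd p) else 0)"
    by (rule sum.distrib)
  also have "\<dots> = (d (?c (b, j)) + ?c (b, j) * emb b) + ?c (b, Suc j) * of_nat (Suc j)"
    by (subst sum_delta_F[OF fin], simp add: co_zero_out d_zero,
        subst sum_delta_F[OF fin], simp add: co_zero_out, simp)
  finally show ?thesis by simp
qed

lemma gamma_facts: "\<gamma> 0 = 1" "a \<in> R \<Longrightarrow> \<gamma> a = 1 \<Longrightarrow> a = 0"
proof -
  show "\<gamma> 0 = 1" using gi by (simp add: gamma_iso_def)
  assume aR: "a \<in> R" and g1: "\<gamma> a = 1"
  have aZ: "a \<in> \<int>" using gi g1 by (simp add: gamma_iso_def)
  have "\<exists>!r. r \<in> R \<and> a - r \<in> \<int>" using reps by (simp add: reps_KZ_def)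
  moreover have "0 \<in> R" using reps by (simp add: reps_KZ_def)
  ultimately show "a = 0" using aR aZ by (metis Ints_0 diff_self diff_zero)
qed

lemma d_mult_emb: "d (y * emb k) = emb k * d y"
  by (simp add: d_mult d_emb mult.commute)

lemma nel1: "d (d f) = 0 \<Longrightarrow> f \<in> range emb"
  using nel unfolding no_exp_no_log_def by blast
lemma nel2: "a \<in> R \<Longrightarrow> a \<noteq> 0 \<Longrightarrow> d f + emb a * f = 0 \<Longrightarrow> f = 0"
  using nel unfolding no_exp_no_log_def by blast

theorem E1:
  assumes dx: "dE x = 0"
  shows "\<exists>k. x = \<iota> (emb k)"
proof -
  let ?c = "co x"
  have fin: "finite (fsupp ?c)" by (rule Eb.coord_fin)
  have cd: "d (?c (b, j)) + ?c (b, j) * emb b + ?c (b, Suc j) * of_nat (Suc j) = 0" for b j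
    using CD[of x b j] dx Eb.coord_zero by simp
  have z: "?c p = 0" if "p \<noteq> (0, 0)" for p
  proof (rule ccontr)
    assume nz: "?c p \<noteq> 0"
    obtain a j where pp: "p = (a, j)" by (cases p)
    obtain N where N: "j \<le> N" "?c (a, N) \<noteq> 0" "\<forall>m. N < m \<longrightarrow> ?c (a, m) = 0"
      using maxdeg[OF fin, of a j] nz pp by auto
    have aR: "a \<in> R" using suppJ[of "(a, N)" x] N(2) by (simp add: fsupp_def)
    show False
    proof (cases "a = 0")
      case False
      have "d (?c (a, N)) + emb a * ?c (a, N) = 0"
        using cd[of a N] N(3) by (simp add: mult.commute)
      then show False using nel2[OF aR False] N(2) by blast
    next
      case True
      then have "j \<noteq> 0" using that pp by simp
      then obtain M where NM: "N = Suc M" using N(1) by (cases N) auto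
      have c1: "d (?c (0, N)) = 0" using cd[of 0 N] N(3) True by (simp add: e.zero)
      have c2: "d (?c (0, M)) = - (?c (0, N) * of_nat N)"
        using cd[of 0 M] NM by (simp add: e.zero eq_neg_iff_add_eq_0)
      have "d (d (?c (0, M))) = - (emb (of_nat N) * d (?c (0, N)))"
        unfolding c2 d_uminus of_nat_emb d_mult_emb ..
      then have "d (d (?c (0, M))) = 0" using c1 by simp
      then obtain k where "?c (0, M) = emb k" using nel1 by blast
      then have "?c (0, N) * of_nat N = 0" using c2 d_emb by simp
      then have "?c (0, N) = 0" using nat_cancel[of N] NM by (simp add: mult.commute)
      then show False using N(2) True by simp
    qed
  qed
  have sub: "fsupp ?c \<subseteq> {(0, 0)}" using z by (auto simp: fsupp_def)
  have "x = (\<Sum>p\<in>{(0, 0)}. \<iota> (?c p) * g p)"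
    by (rule Eb.coord_repr[OF _ sub]) simp
  then have xe: "x = \<iota> (?c (0, 0))" by (simp add: T0)
  have "d (?c (0, 0)) = 0" using cd[of 0 0] z[of "(0, Suc 0)"] by (simp add: e.zero)
  then have "d (d (?c (0, 0))) = 0" by (simp add: d_zero)
  then obtain k where "?c (0, 0) = emb k" using nel1 by blast
  then have "x = \<iota> (emb k)" using xe by simp
  then show ?thesis by (rule exI)
qed

end




context Eset
begin

lemma sig_gen_expand:
  "\<sigma> (\<iota> f * (T b * l ^ m)) = (\<Sum>j\<in>{..m}. \<iota> (f * emb (\<gamma> b) * of_nat (m choose j)) * (T b * l ^ j))"
proof -
  have "\<sigma> (\<iota> f * (T b * l ^ m)) = \<iota> f * (\<iota> (emb (\<gamma> b)) * T b * (l + 1) ^ m)"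
    by (simp add: s.mult s.power sig_iota sig_T sig_l)
  also have "(l + 1) ^ m = (\<Sum>j\<le>m. of_nat (m choose j) * l ^ j * 1 ^ (m - j))"
    by (rule binomial_ring)
  finally show ?thesis
    by (simp add: sum_distrib_left i.mult i.of_nat algebra_simps)
qed

lemma co_sig_gen:
  assumes b: "b \<in> R"
  shows "co (\<sigma> (\<iota> f * (T b * l ^ m))) (a, k) = (if a = b \<and> k \<le> m then f * emb (\<gamma> b) * of_nat (m choose k) else 0)"
proof -
  have "co (\<sigma> (\<iota> f * (T b * l ^ m))) (a, k)
     = (\<Sum>j\<in>{..m}. (f * emb (\<gamma> b) * of_nat (m choose j)) * (if (a, k) = (b, j) then 1 else 0))"
    unfolding sig_gen_expand Eb.coord_sum cscale cgen[OF b] ..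
  also have "\<dots> = (\<Sum>j\<in>{..m}. if j = k then (if a = b then f * emb (\<gamma> b) * of_nat (m choose j) else 0) else 0)"
    by (rule sum.cong) auto
  also have "\<dots> = (if a = b \<and> k \<le> m then f * emb (\<gamma> b) * of_nat (m choose k) else 0)"
    by (simp add: sum.delta')
  finally show ?thesis .
qed

lemma CS:
  "co (\<sigma> x) (a, k) = (\<Sum>p\<in>fsupp (co x). if fst p = a \<and> k \<le> snd p then co x p * emb (\<gamma> a) * of_nat (snd p choose k) else 0)"
proof -
  let ?c = "co x" and ?F = "fsupp (co x)"
  have "\<sigma> x = (\<Sum>p\<in>?F. \<sigma> (\<iota> (?c p) * (T (fst p) * l ^ snd p)))"
    by (subst x_repr) (simp add: s.sum)
  then have "co (\<sigma> x) (a, k) = (\<Sum>p\<in>?F. co (\<sigma> (\<iota> (?c p) * (T (fst p) * l ^ snd p))) (a, k))"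
    by (simp add: Eb.coord_sum)
  also have "\<dots> = (\<Sum>p\<in>?F. if fst p = a \<and> k \<le> snd p then ?c p * emb (\<gamma> a) * of_nat (snd p choose k) else 0)"
  proof (rule sum.cong[OF refl])
    fix p assume p: "p \<in> ?F"
    show "co (\<sigma> (\<iota> (?c p) * (T (fst p) * l ^ snd p))) (a, k) =
      (if fst p = a \<and> k \<le> snd p then ?c p * emb (\<gamma> a) * of_nat (snd p choose k) else 0)"
      unfolding co_sig_gen[OF suppJ[OF p]] by auto
  qed
  finally show ?thesis .
qed

theorem E2:
  assumes sx: "\<sigma> x = x"
  shows "\<exists>f. x = \<iota> f"
proof -
  let ?c = "co x" and ?F = "fsupp (co x)"
  have fin: "finite ?F" by (rule Eb.coord_fin)
  have cs: "?c (a, k) = (\<Sum>p\<in>?F. if fst p = a \<and> k \<le> snd p then ?c p * emb (\<gamma> a) * of_nat (snd p choose k) else 0)" for a k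
    using CS[of x a k] sx by simp
  have z: "?c p = 0" if "p \<noteq> (0, 0)" for p
  proof (rule ccontr)
    assume nz: "?c p \<noteq> 0"
    obtain a j where pp: "p = (a, j)" by (cases p)
    obtain N where N: "j \<le> N" "?c (a, N) \<noteq> 0" "\<forall>m. N < m \<longrightarrow> ?c (a, m) = 0"
      using maxdeg[OF fin, of a j] nz pp by auto
    have aR: "a \<in> R" using suppJ[of "(a, N)" x] N(2) by (simp add: fsupp_def)
    have le: "q \<in> ?F \<Longrightarrow> fst q = a \<Longrightarrow> snd q \<le> N" for q
      using N(3) by (cases q) (auto simp: fsupp_def not_le[symmetric])
    have "(\<Sum>p\<in>?F. if fst p = a \<and> N \<le> snd p then ?c p * emb (\<gamma> a) * of_nat (snd p choose N) else 0)
        = (\<Sum>p\<in>?F. if p = (a, N) then ?c p * emb (\<gamma> a) else 0)"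
    proof (rule sum.cong[OF refl])
      fix q assume q: "q \<in> ?F"
      show "(if fst q = a \<and> N \<le> snd q then ?c q * emb (\<gamma> a) * of_nat (snd q choose N) else 0)
          = (if q = (a, N) then ?c q * emb (\<gamma> a) else 0)"
        using le[OF q] by (cases q) auto
    qed
    also have "\<dots> = ?c (a, N) * emb (\<gamma> a)"
      by (rule sum_delta_F[OF fin]) (simp add: co_zero_out)
    finally have "?c (a, N) = ?c (a, N) * emb (\<gamma> a)" using cs[of a N] by simp
    then have "emb (\<gamma> a - 1) * ?c (a, N) = 0" by (simp add: e.diff e.one algebra_simps)
    then have "\<gamma> a - 1 = 0" using emb_cancel N(2) by blast
    then have a0: "a = 0" using gamma_facts(2)[OF aR] by simp
    then have "j \<noteq> 0" using that pp by simp
    then obtain M where NM: "N = Suc M" using N(1) by (cases N) auto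
    have g0: "emb (\<gamma> 0) = 1" by (simp add: gamma_facts(1) e.one)
    have "(\<Sum>p\<in>?F. if fst p = 0 \<and> M \<le> snd p then ?c p * emb (\<gamma> 0) * of_nat (snd p choose M) else 0)
        = (\<Sum>p\<in>?F. (if p = (0, M) then ?c p else 0) + (if p = (0, N) then ?c p * of_nat N else 0))"
    proof (rule sum.cong[OF refl])
      fix q assume q: "q \<in> ?F"
      obtain u v where qq: "q = (u, v)" by (cases q)
      have "u = 0 \<Longrightarrow> v \<le> N" using le[OF q] a0 qq by simp
      then show "(if fst q = 0 \<and> M \<le> snd q then ?c q * emb (\<gamma> 0) * of_nat (snd q choose M) else 0)
          = (if q = (0, M) then ?c q else 0) + (if q = (0, N) then ?c q * of_nat N else 0)"
        unfolding qq g0 using NM by (auto simp: le_Suc_eq)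
    qed
    also have "\<dots> = ?c (0, M) + ?c (0, N) * of_nat N"
      by (simp add: sum.distrib sum_delta_F[OF fin] co_zero_out)
    finally have "?c (0, M) = ?c (0, M) + ?c (0, N) * of_nat N" using cs[of 0 M] by simp
    then have "of_nat N * ?c (0, N) = 0" by (simp add: mult.commute)
    then have "?c (0, N) = 0" using nat_cancel NM by blast
    then show False using N(2) a0 by simp
  qed
  have sub: "fsupp ?c \<subseteq> {(0, 0)}" using z by (auto simp: fsupp_def)
  have "x = (\<Sum>p\<in>{(0, 0)}. \<iota> (?c p) * g p)"
    by (rule Eb.coord_repr[OF _ sub]) simp
  then have "x = \<iota> (?c (0, 0))" by (simp add: T0)
  then show ?thesis by (rule exI)
qed

end




theorem mainTheorem8:
  fixes emb :: "'k::field_char_0 \<Rightarrow> 'a::comm_ring_1"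
    and t :: 'a and d :: "'a \<Rightarrow> 'a" and R :: "'k set" and \<gamma> :: "'k \<Rightarrow> 'k"
    and \<iota> :: "'a \<Rightarrow> 'e::comm_ring_1" and T :: "'k \<Rightarrow> 'e" and l :: 'e
    and dE :: "'e \<Rightarrow> 'e" and \<sigma> :: "'e \<Rightarrow> 'e"
    and sV :: "'k \<Rightarrow> 'v::ab_group_add \<Rightarrow> 'v" and rho :: "'v \<Rightarrow> 'v"
    and sM :: "'a \<Rightarrow> 'm::ab_group_add \<Rightarrow> 'm" and nabla :: "'m \<Rightarrow> 'm"
  assumes "alg_closed TYPE('k)"
    and "contains_laurent emb t"
    and "is_derivation d" and "extends_tddt emb t d"
    and "reps_KZ R"
    and "no_exp_no_log emb R d"
    and "gamma_iso \<gamma>"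
    and "is_E_A emb t R \<iota> T l"
    and "is_E_derivation emb d \<iota> T l dE"
    and "is_E_sigma emb \<gamma> \<iota> T l \<sigma>"
  shows "(Z_rep sV rho \<longrightarrow>
           {C \<in> tensor_space sV (\<lambda>c x. \<iota> (emb c) * x).
              tensor_id_map sV (\<lambda>c x. \<iota> (emb c) * x) dE C = tcls sV (\<lambda>c x. \<iota> (emb c) * x) 0}
             = range (\<lambda>v. tpure sV (\<lambda>c x. \<iota> (emb c) * x) v 1)
           \<and> inj (\<lambda>v. tpure sV (\<lambda>c x. \<iota> (emb c) * x) v 1))
         \<and> (diff_module d sM nabla \<and> free_module sM \<longrightarrow>
           {C \<in> tensor_space sM (\<lambda>f x. \<iota> f * x).
              tensor_id_map sM (\<lambda>f x. \<iota> f * x) \<sigma> C = C}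
             = range (\<lambda>m. tpure sM (\<lambda>f x. \<iota> f * x) m 1)
           \<and> inj (\<lambda>m. tpure sM (\<lambda>f x. \<iota> f * x) m 1))"
proof -
  interpret E: Eset emb t d R \<gamma> \<iota> T l dE \<sigma>
    by unfold_locales (use assms in auto)
  have uinj1: "\<And>k. \<iota> (emb k) * 1 = 0 \<Longrightarrow> k = 0"
  proof -
    fix k assume "\<iota> (emb k) * 1 = 0"
    then have "emb k = emb 0" using E.iota_inj0 E.e.zero by simp
    then show "k = 0" using E.emb_inj by (simp add: inj_eq)
  qed
  have uinj2: "\<And>k. \<iota> k * 1 = 0 \<Longrightarrow> k = 0" using E.iota_inj0 by simp
  have part1: "{C \<in> tensor_space sV (\<lambda>c x. \<iota> (emb c) * x).
              tensor_id_map sV (\<lambda>c x. \<iota> (emb c) * x) dE C = tcls sV (\<lambda>c x. \<iota> (emb c) * x) 0}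
             = range (\<lambda>v. tpure sV (\<lambda>c x. \<iota> (emb c) * x) v 1)
           \<and> inj (\<lambda>v. tpure sV (\<lambda>c x. \<iota> (emb c) * x) v 1)" if Z: "Z_rep sV rho"
  proof -
    have vs: "vector_space sV" using Z by (simp add: Z_rep_def)
    interpret V: vector_space sV by (rule vs)
    obtain B where B: "V.independent B" "UNIV \<subseteq> V.span B"
      using V.basis_exists[of UNIV] by blast
    have mV: "module sV" using vs by (simp add: module_iff_vector_space)
    have fb: "fbasis sV id B" by (rule fbasis_of_basis[OF mV]) (use B in auto)
    have mN: "module (\<lambda>c x. \<iota> (emb c) * x)"
      by unfold_locales (simp_all add: E.i.add E.i.mult E.e.add E.e.mult E.e.one E.i.one algebra_simps)
    have td: "tensD sV B (\<lambda>c x. \<iota> (emb c) * x) dE"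
      unfolding tensD_def tensD_axioms_def tens_def
      using fb mN by (simp add: E.dE_add E.dE_mult E.dE_iota E.d_emb E.i.zero)
    interpret T1: tensD sV B "\<lambda>c x. \<iota> (emb c) * x" dE by (rule td)
    have char: "dE n = 0 \<longleftrightarrow> (\<exists>k. n = \<iota> (emb k) * 1)" for n
      using E.E1[of n] by (auto simp: E.dE_iota E.d_emb E.i.zero)
    show ?thesis by (rule T1.G0[OF char uinj1])
  qed
  have part2: "{C \<in> tensor_space sM (\<lambda>f x. \<iota> f * x).
              tensor_id_map sM (\<lambda>f x. \<iota> f * x) \<sigma> C = C}
             = range (\<lambda>m. tpure sM (\<lambda>f x. \<iota> f * x) m 1)
           \<and> inj (\<lambda>m. tpure sM (\<lambda>f x. \<iota> f * x) m 1)" if DM: "diff_module d sM nabla \<and> free_module sM"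
  proof -
    have mM: "module sM" using DM by (simp add: diff_module_def)
    obtain B where B: "\<not> module.dependent sM B" "module.span sM B = UNIV"
      using DM by (auto simp: free_module_def)
    have fb: "fbasis sM id B" by (rule fbasis_of_basis[OF mM B])
    have mN: "module (\<lambda>f x. \<iota> f * x)"
      by unfold_locales (simp_all add: E.i.add E.i.mult E.i.one algebra_simps)
    have td: "tensD sM B (\<lambda>f x. \<iota> f * x) \<sigma>"
      unfolding tensD_def tensD_axioms_def tens_def
      using fb mN by (simp add: E.s.add E.s.mult E.sig_iota)
    interpret T2: tensD sM B "\<lambda>f x. \<iota> f * x" \<sigma> by (rule td)
    have char: "\<sigma> n = n \<longleftrightarrow> (\<exists>k. n = \<iota> k * 1)" for n
      using E.E2[of n] by (auto simp: E.sig_iota)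
    show ?thesis by (rule T2.G1[OF char uinj2])
  qed
  show ?thesis using part1 part2 by blast
qed


end
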